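(* Let $q\in\mathbb{N}$, let $\psi$ be a primitive Dirichlet character mod $q_0$ with $q_0\mid q$, and let $f$ be a $q$-periodic arithmetical function with $f\in E_{q,\psi}$. Then $$f(n)=\sum_{d\mid\frac q{q_0}}g(d)\,\tau\big(n,\overline{\psi_{q/d}}\big),\qquad n=1,2,\dots,$$ where $g=\mathcal{T}f$.
   Context: A Dirichlet character mod $m$ is a completely multiplicative $m$-periodic function with $\chi(n)\ne0$ iff $\gcd(n,m)=1$; primitive means not induced (in the sense $\chi=\psi'\chi_m$, $\chi_m$ principal) by a character of modulus a proper divisor. $\psi_{q/d}=\psi\chi_{q/d}$ is the character mod $\frac qd$ induced by $\psi$. For a character $\chi$ mod $m$, the Gauss sum is $\tau(n,\chi)=\sum_{k=1}^m\chi(k)e^{2\pi ikn/m}$. For $d\mid q$ and a character $\chi$ mod $\frac qd$, $\xi_\chi(n)=\chi(\frac nd)$ if $d\mid n$, $0$ otherwise; $E_{q,\psi}$ is the span of $\{\xi_{\psi_{q/d}}:d\mid\frac q{q_0}\}$. For $q$-periodic $f$, $(\mathcal{T}f)(m)=\frac1q\sum_{n=1}^qe^{-2\pi imn/q}f(n)$. *)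

theory Defs
  imports "HOL-Analysis.Analysis"
begin

text \<open>Arithmetical functions are modelled as nat \<Rightarrow> complex; only arguments n \<ge> 1 matter.\<close>

definition dirichlet_char :: "nat \<Rightarrow> (nat \<Rightarrow> complex) \<Rightarrow> bool" where
  "dirichlet_char m chi \<longleftrightarrow> m > 0 \<and>
     (\<forall>a b. chi (a * b) = chi a * chi b) \<and> chi 1 = 1 \<and>
     (\<forall>n. chi (n + m) = chi n) \<and>
     (\<forall>n. chi n \<noteq> 0 \<longleftrightarrow> coprime n m)"

definition principal_char :: "nat \<Rightarrow> nat \<Rightarrow> complex" where
  "principal_char m n = (if coprime n m then 1 else 0)"

definition induced_char :: "nat \<Rightarrow> (nat \<Rightarrow> complex) \<Rightarrow> nat \<Rightarrow> complex" where
  "induced_char m \<psi> n = \<psi> n * principal_char m n"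

definition primitive_char :: "nat \<Rightarrow> (nat \<Rightarrow> complex) \<Rightarrow> bool" where
  "primitive_char m chi \<longleftrightarrow> dirichlet_char m chi \<and>
     \<not> (\<exists>d \<psi>'. d dvd m \<and> d < m \<and> dirichlet_char d \<psi>' \<and> chi = induced_char m \<psi>')"

definition gauss_sum :: "nat \<Rightarrow> nat \<Rightarrow> (nat \<Rightarrow> complex) \<Rightarrow> complex" where
  "gauss_sum m n chi = (\<Sum>k=1..m. chi k * exp (2 * of_real pi * \<i> * of_nat k * of_nat n / of_nat m))"

definition xi :: "nat \<Rightarrow> (nat \<Rightarrow> complex) \<Rightarrow> nat \<Rightarrow> complex" where
  "xi d chi n = (if d dvd n then chi (n div d) else 0)"

definition in_E :: "nat \<Rightarrow> nat \<Rightarrow> (nat \<Rightarrow> complex) \<Rightarrow> (nat \<Rightarrow> complex) \<Rightarrow> bool" where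
  "in_E q q0 \<psi> f \<longleftrightarrow> (\<exists>c :: nat \<Rightarrow> complex. \<forall>n\<ge>1.
      f n = (\<Sum>d | d dvd (q div q0). c d * xi d (induced_char (q div d) \<psi>) n))"

definition finite_fourier :: "nat \<Rightarrow> (nat \<Rightarrow> complex) \<Rightarrow> nat \<Rightarrow> complex" where
  "finite_fourier q f m = (1 / of_nat q) *
     (\<Sum>n=1..q. exp (- 2 * of_real pi * \<i> * of_nat m * of_nat n / of_nat q) * f n)"

end

theory Submission imports Defs "HOL-Number_Theory.Number_Theory" begin

definition W :: "nat \<Rightarrow> int \<Rightarrow> complex" where
  "W q x = exp (2 * of_real pi * \<i> * of_int x / of_nat q)"

lemma W_cong:
  assumes "q > 0" "[x = y] (mod int q)"
  shows "W q x = W q y"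
proof -
  obtain k where k: "x = y + int q * k"
    using assms(2) by (metis cong_iff_lin cong_sym mult.commute)
  have "2 * of_real pi * \<i> * of_int x / of_nat q =
        2 * of_real pi * \<i> * of_int y / of_nat q + of_int (2 * k) * pi * \<i>"
    using assms(1) by (simp add: k field_simps)
  then show ?thesis unfolding W_def by (metis exp_eq)
qed

lemma W_add: "W q (x + y) = W q x * W q y"
  unfolding W_def by (simp add: distrib_left add_divide_distrib exp_add [symmetric])

lemma W_0 [simp]: "W q 0 = 1"
  unfolding W_def by simp

lemma W_dvd: "q > 0 \<Longrightarrow> int q dvd x \<Longrightarrow> W q x = 1"
  using W_cong[of q x 0] by (simp add: cong_0_iff)

lemma W_eq_1: assumes "q > 0" "W q x = 1" shows "int q dvd x"
proof -
  from assms(2) obtain n :: int where n: "Im (2 * of_real pi * \<i> * of_int x / of_nat q) = of_int (2 * n) * pi"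
    unfolding W_def exp_eq_1 by blast
  have "Im (2 * of_real pi * \<i> * of_int x / of_nat q) = 2 * pi * x / q"
    by simp
  with n have "2 * pi * x / q = 2 * n * pi" by simp
  hence "real_of_int x = real_of_int (n * int q)" using assms(1) pi_gt_zero
    by (simp add: field_simps)
  hence "x = n * int q" by linarith
  thus ?thesis by simp
qed

lemma W_mult_nat: "W q (int m * x) = W q x ^ m"
  by (induction m) (simp_all add: distrib_right W_add)

lemma sum_W: assumes "q > 0"
  shows "(\<Sum>m\<in>{1..q}. W q (int m * x)) = (if int q dvd x then of_nat q else 0)"
proof -
  have "(\<Sum>m\<in>{1..q}. W q (int m * x)) = (\<Sum>m<q. W q (int m * x))"
  proof -
    have e: "{1..q} = Suc ` {..<q}"
      by (simp add: lessThan_atLeast0 atLeastLessThanSuc_atLeastAtMost)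
    have "(\<Sum>m\<in>{1..q}. W q (int m * x)) = (\<Sum>m<q. W q (int (Suc m) * x))"
      unfolding e by (subst sum.reindex) auto
    also have "\<dots> = (\<Sum>m<Suc q. W q (int m * x)) - W q 0"
      by (subst sum.lessThan_Suc_shift) simp
    also have "\<dots> = (\<Sum>m<q. W q (int m * x)) + W q (int q * x) - W q 0"
      by simp
    also have "W q (int q * x) = 1" using assms by (intro W_dvd) auto
    finally show ?thesis by simp
  qed
  also have "\<dots> = (\<Sum>m<q. W q x ^ m)" by (simp add: W_mult_nat)
  also have "\<dots> = (if int q dvd x then of_nat q else 0)"
  proof (cases "int q dvd x")
    case True
    then show ?thesis using assms by (simp add: W_dvd)
  next
    case False
    hence "W q x \<noteq> 1" using W_eq_1 assms by blast
    moreover have "W q x ^ q = 1" using assms by (simp add: W_mult_nat[symmetric] W_dvd)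
    ultimately show ?thesis using False by (simp add: sum_gp_strict)
  qed
  finally show ?thesis .
qed

definition rep :: "nat \<Rightarrow> nat \<Rightarrow> nat" where
  "rep q n = (if n mod q = 0 then q else n mod q)"

lemma rep_in: "q > 0 \<Longrightarrow> rep q n \<in> {1..q}"
  unfolding rep_def by (auto simp: less_imp_le)

lemma rep_cong: "[rep q n = n] (mod q)"
  unfolding rep_def by (auto simp: cong_def)

lemma rep_mod: "n mod q = m mod q \<Longrightarrow> rep q n = rep q m"
  unfolding rep_def by simp

lemma rep_id: "n \<in> {1..q} \<Longrightarrow> rep q n = n"
  unfolding rep_def by (cases "n = q") auto

lemma rep_unique: "j \<in> {1..q} \<Longrightarrow> [j = n] (mod q) \<Longrightarrow> j = rep q n"
  by (metis cong_def rep_id rep_mod)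

lemma per:
  assumes "q > 0" "\<forall>n\<ge>1. f (n + q) = f n" "n \<ge> 1"
  shows "f n = f (rep q n)"
  using assms(3)
proof (induction n rule: less_induct)
  case (less n)
  show ?case
  proof (cases "n \<le> q")
    case True
    then show ?thesis using less.prems by (simp add: rep_id)
  next
    case False
    have "f n = f ((n - q) + q)" using False by simp
    also have "\<dots> = f (n - q)" using assms(2)[rule_format, of "n - q"] False by simp
    also have "\<dots> = f (rep q (n - q))" using less.IH[of "n - q"] False assms(1) by simp
    also have "rep q (n - q) = rep q n" using False
      by (intro rep_mod) (simp add: le_mod_geq)
    finally show ?thesis .
  qed
qed

lemma ff_W: "finite_fourier q f m = 1 / of_nat q * (\<Sum>j\<in>{1..q}. W q (- (int m * int j)) * f j)"
  unfolding finite_fourier_def W_def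
  by (intro arg_cong[where f="\<lambda>x. _ * x"] sum.cong refl) (simp add: algebra_simps)

lemma inversion:
  assumes q: "q > 0" and P: "\<forall>n\<ge>1. f (n + q) = f n" and n: "n \<ge> 1"
  shows "f n = (\<Sum>m\<in>{1..q}. finite_fourier q f m * W q (int m * int n))"
proof -
  have "(\<Sum>m\<in>{1..q}. finite_fourier q f m * W q (int m * int n)) =
        (\<Sum>m\<in>{1..q}. \<Sum>j\<in>{1..q}. 1 / of_nat q * (f j * W q (int m * (int n - int j))))"
    unfolding ff_W sum_distrib_left sum_distrib_right
    by (intro sum.cong refl) (simp add: W_add[symmetric] algebra_simps)
  also have "\<dots> = (\<Sum>j\<in>{1..q}. 1 / of_nat q * (f j * (\<Sum>m\<in>{1..q}. W q (int m * (int n - int j)))))"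
    by (subst sum.swap) (simp add: sum_distrib_left)
  also have "\<dots> = (\<Sum>j\<in>{1..q}. if j = rep q n then f j else 0)"
  proof (intro sum.cong refl)
    fix j assume j: "j \<in> {1..q}"
    have "int q dvd (int n - int j) \<longleftrightarrow> j = rep q n"
    proof
      assume "int q dvd (int n - int j)"
      hence "[j = n] (mod q)"
        by (metis cong_iff_dvd_diff cong_int_iff cong_sym)
      thus "j = rep q n" using rep_unique j by blast
    next
      assume "j = rep q n"
      hence "[j = n] (mod q)" using rep_cong by simp
      thus "int q dvd (int n - int j)"
        by (metis cong_iff_dvd_diff cong_int_iff cong_sym)
    qed
    moreover have S: "(\<Sum>m\<in>{1..q}. W q (int m * (int n - int j))) =
      (if int q dvd (int n - int j) then of_nat q else 0)" by (rule sum_W[OF q])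
    ultimately show "1 / of_nat q * (f j * (\<Sum>m\<in>{1..q}. W q (int m * (int n - int j)))) =
          (if j = rep q n then f j else 0)"
      unfolding S using q by simp
  qed
  also have "\<dots> = f (rep q n)"
    using rep_in[OF q] by simp
  also have "\<dots> = f n" using per[OF q P n] by simp
  finally show ?thesis by simp
qed

lemma W_cong_nat:
  assumes "q > 0" "[a = b] (mod q)"
  shows "W q (x * int a) = W q (x * int b)"
proof -
  have "[int a = int b] (mod int q)" using assms(2) by (simp add: cong_int_iff)
  hence "[x * int a = x * int b] (mod int q)" by (intro cong_mult cong_refl)
  thus ?thesis using W_cong[OF assms(1)] by blast
qed

lemma dc_facts:
  assumes "dirichlet_char m chi"
  shows "m > 0" "chi (a * b) = chi a * chi b" "chi 1 = 1" "chi n \<noteq> 0 \<longleftrightarrow> coprime n m"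
  using assms unfolding dirichlet_char_def by auto

lemma dc_mod:
  assumes "dirichlet_char m chi"
  shows "chi n = chi (n mod m)"
proof -
  have per: "\<forall>n. chi (n + m) = chi n" using assms unfolding dirichlet_char_def by auto
  have "chi (r + m * t) = chi r" for r t
  proof (induction t)
    case (Suc t)
    have "chi (r + m * Suc t) = chi ((r + m * t) + m)" by (simp add: algebra_simps)
    then show ?case using per Suc by simp
  qed simp
  from this[of "n mod m" "n div m"] show ?thesis by simp
qed

lemma dc_cong:
  assumes "dirichlet_char m chi" "[a = b] (mod m)"
  shows "chi a = chi b"
  using dc_mod[OF assms(1), of a] dc_mod[OF assms(1), of b] assms(2) by (simp add: cong_def)

lemma dc_pow:
  assumes "dirichlet_char m chi"
  shows "chi (a ^ k) = chi a ^ k"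
proof (induction k)
  case 0
  then show ?case by (metis dc_facts(3)[OF assms] power_0)
qed (simp_all add: dc_facts[OF assms])

lemma dc_norm:
  assumes "dirichlet_char m chi" "coprime k m"
  shows "norm (chi k) = 1"
proof -
  have m: "m > 0" using dc_facts[OF assms(1)] by simp
  have "[k ^ totient m = 1] (mod m)" using euler_theorem[OF assms(2)] .
  hence "chi k ^ totient m = 1" using dc_cong[OF assms(1)] dc_pow[OF assms(1)] dc_facts(3)[OF assms(1)]
    by metis
  hence "norm (chi k) ^ totient m = 1" by (metis norm_one norm_power)
  moreover have "totient m > 0" using m by simp
  ultimately show ?thesis
    using power_eq_imp_eq_base[of "norm (chi k)" "totient m" 1] by simp
qed

lemma dc_cnj:
  assumes "dirichlet_char m chi" "coprime k m"
  shows "cnj (chi k) = 1 / chi k"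
proof -
  have "chi k * cnj (chi k) = 1"
    using dc_norm[OF assms] complex_norm_square[of "chi k"] by simp
  moreover have "chi k \<noteq> 0" using dc_facts(4)[OF assms(1)] assms(2) by simp
  ultimately show ?thesis by (simp add: field_simps)
qed

lemma rep_bij:
  assumes q: "q > 0" and k: "coprime k q"
  shows "bij_betw (\<lambda>n. rep q (k * n)) {1..q} {1..q}"
proof -
  have inj: "inj_on (\<lambda>n. rep q (k * n)) {1..q}"
  proof
    fix x y assume x: "x \<in> {1..q}" and y: "y \<in> {1..q}" and e: "rep q (k * x) = rep q (k * y)"
    have "[k * x = k * y] (mod q)"
      by (metis e rep_cong cong_sym cong_trans)
    hence "[x = y] (mod q)" using k by (simp add: cong_mult_lcancel_nat)
    thus "x = y" using rep_unique[OF x] rep_id[OF y] by simp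
  qed
  moreover have "(\<lambda>n. rep q (k * n)) ` {1..q} \<subseteq> {1..q}" using rep_in[OF q] by auto
  ultimately have "(\<lambda>n. rep q (k * n)) ` {1..q} = {1..q}"
    by (meson endo_inj_surj finite_atLeastAtMost)
  with inj show ?thesis unfolding bij_betw_def by simp
qed

lemma propA:
  assumes q: "q > 0" and P: "\<forall>n\<ge>1. f (n + q) = f n" and k: "coprime k q" "k > 0"
    and fm: "\<forall>n\<ge>1. f (k * n) = c * f n"
  shows "c * finite_fourier q f (k * m) = finite_fourier q f m"
proof -
  have "(\<Sum>j\<in>{1..q}. W q (- (int m * int j)) * f j) =
        (\<Sum>j\<in>{1..q}. W q (- (int m * int (rep q (k * j)))) * f (rep q (k * j)))"
    by (rule sum.reindex_bij_betw[OF rep_bij[OF q k(1)], symmetric])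
  also have "\<dots> = (\<Sum>j\<in>{1..q}. W q (- (int m * int (k * j))) * f (k * j))"
  proof (intro sum.cong refl)
    fix j assume j: "j \<in> {1..q}"
    have "f (rep q (k * j)) = f (k * j)" using per[OF q P, of "k * j"] j k(2) by simp
    moreover have "W q (- (int m * int (rep q (k * j)))) = W q (- (int m * int (k * j)))"
      using W_cong_nat[OF q rep_cong, of "- int m"] by simp
    ultimately show "W q (- (int m * int (rep q (k * j)))) * f (rep q (k * j)) =
       W q (- (int m * int (k * j))) * f (k * j)" by simp
  qed
  also have "\<dots> = c * (\<Sum>j\<in>{1..q}. W q (- (int (k * m) * int j)) * f j)"
    unfolding sum_distrib_left
    by (intro sum.cong refl) (use fm in \<open>auto simp: algebra_simps\<close>)
  finally show ?thesis unfolding ff_W by simp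
qed


lemma E_mult:
  assumes dc: "dirichlet_char q0 \<psi>" and q0q: "q0 dvd q" and q: "q > 0"
    and E: "in_E q q0 \<psi> f" and k: "coprime k q" "k > 0" and n: "n \<ge> 1"
  shows "f (k * n) = \<psi> k * f n"
proof -
  obtain c where c: "\<forall>n\<ge>1. f n = (\<Sum>d | d dvd (q div q0). c d * xi d (induced_char (q div d) \<psi>) n)"
    using E unfolding in_E_def by blast
  have kn: "k * n \<ge> 1" using k n by simp
  have X: "xi d (induced_char (q div d) \<psi>) (k * n) = \<psi> k * xi d (induced_char (q div d) \<psi>) n"
    if d: "d dvd q div q0" for d
  proof -
    have "q div q0 dvd q" using q0q by (metis dvd_div_mult_self dvd_triv_left)
    hence dq: "d dvd q" using d dvd_trans by blast
    have "q div d dvd q" using dq by (metis dvd_div_mult_self dvd_triv_left)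
    hence ckr: "coprime k (q div d)" using k(1) coprime_divisors dvd_refl by blast
    have ckd: "coprime d k" using k(1) dq coprime_divisors dvd_refl coprime_commute by blast
    have ind: "induced_char (q div d) \<psi> (k * x) = \<psi> k * induced_char (q div d) \<psi> x" for x
      unfolding induced_char_def principal_char_def
      using ckr dc_facts(2)[OF dc, of k x] by (simp add: coprime_mult_left_iff)
    show ?thesis
    proof (cases "d dvd n")
      case True
      hence "d dvd k * n" by simp
      moreover have "k * n div d = k * (n div d)" using True by (simp add: div_mult_swap)
      ultimately show ?thesis using True unfolding xi_def by (simp add: ind)
    next
      case False
      hence "\<not> d dvd k * n" using ckd coprime_dvd_mult_right_iff by blast
      thus ?thesis using False unfolding xi_def by simp
    qed
  qed
  have "f (k * n) = (\<Sum>d | d dvd (q div q0). c d * xi d (induced_char (q div d) \<psi>) (k * n))"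
    using c kn by blast
  also have "\<dots> = (\<Sum>d | d dvd (q div q0). \<psi> k * (c d * xi d (induced_char (q div d) \<psi>) n))"
    by (intro sum.cong refl) (simp add: X)
  also have "\<dots> = \<psi> k * f n" using c n by (simp add: sum_distrib_left)
  finally show ?thesis .
qed

lemma lift:
  fixes a L M :: nat
  assumes "coprime a L" "L dvd M" "M > 0"
  shows "\<exists>c. [c = a] (mod L) \<and> coprime c M \<and> c > 0"
proof -
  define y where "y = (\<Prod>p\<in>{p \<in> prime_factors M. \<not> p dvd a}. p)"
  have fin: "finite {p \<in> prime_factors M. \<not> p dvd a}" by simp
  have y0: "y > 0" unfolding y_def
    by (intro prod_pos) (auto simp: in_prime_factors_iff prime_gt_0_nat)
  have L0: "L > 0" using assms(2,3) by (metis dvd_0_left_iff gr0I)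
  define c where "c = a + L * y"
  have "[c = a] (mod L)" unfolding c_def by (simp add: cong_def)
  moreover have "c > 0" unfolding c_def using y0 L0 by simp
  moreover have "coprime c M"
  proof (rule ccontr)
    assume "\<not> coprime c M"
    hence "gcd c M \<noteq> 1" using coprime_iff_gcd_eq_1 by blast
    then obtain p :: nat where p: "prime p" "p dvd gcd c M" using prime_factor_nat by blast
    hence pc: "p dvd c" and pM: "p dvd M" by auto
    show False
    proof (cases "p dvd a")
      case True
      hence "p dvd L * y" using pc unfolding c_def by (simp add: dvd_add_right_iff)
      moreover have "\<not> p dvd y"
      proof
        assume "p dvd y"
        hence "p dvd prod (\<lambda>p. p) {p \<in> prime_factors M. \<not> p dvd a}" unfolding y_def .
        hence "\<exists>r\<in>{p \<in> prime_factors M. \<not> p dvd a}. p dvd r"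
          by (subst (asm) prime_dvd_prod_iff[OF fin p(1)])
        then obtain r where r: "r \<in> {p \<in> prime_factors M. \<not> p dvd a}" "p dvd r" by blast
        hence "prime r" by (auto simp: in_prime_factors_iff)
        hence "p = r" using r(2) p(1) primes_dvd_imp_eq by blast
        thus False using r True by simp
      qed
      ultimately have "p dvd L" using p(1) prime_dvd_mult_iff by blast
      hence "p dvd gcd a L" using True by simp
      thus False using assms(1) p(1) coprime_iff_gcd_eq_1 by (metis nat_dvd_1_iff_1 not_prime_1)
    next
      case False
      hence "p \<in> {p \<in> prime_factors M. \<not> p dvd a}" using pM p(1) assms(3)
        by (auto simp: in_prime_factors_iff)
      hence "p dvd y" unfolding y_def using fin by (intro dvd_prodI)
      hence "p dvd L * y" by simp
      hence "p dvd a" using pc unfolding c_def by (simp add: dvd_add_left_iff)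
      thus False using False by simp
    qed
  qed
  ultimately show ?thesis by blast
qed

lemma prim_exists:
  assumes pc: "primitive_char q0 \<psi>" and sq: "s dvd q0" "s < q0"
  shows "\<exists>c. coprime c q0 \<and> [c = 1] (mod s) \<and> \<psi> c \<noteq> 1"
proof (rule ccontr)
  assume H: "\<not> ?thesis"
  have H': "\<psi> c = 1" if "coprime c q0" "[c = 1] (mod s)" for c using H that by blast
  have dc: "dirichlet_char q0 \<psi>" using pc unfolding primitive_char_def by blast
  have q0: "q0 > 0" using dc_facts(1)[OF dc] .
  have s0: "s > 0" using sq q0 by (metis dvd_0_left_iff gr0I less_not_refl2)
  have wd: "\<psi> c1 = \<psi> c2" if c1: "coprime c1 q0" and c2: "coprime c2 q0" and e: "[c1 = c2] (mod s)" for c1 c2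
  proof -
    obtain i where i: "[c1 * i = 1] (mod q0)" using cong_solve_coprime_nat[OF c1] by auto
    have "coprime (c1 * i) q0" using cong_imp_coprime[OF cong_sym[OF i]] by simp
    hence ci: "coprime i q0" by simp
    have "[c2 * i = c1 * i] (mod s)" by (intro cong_mult cong_refl cong_sym[OF e])
    moreover have "[c1 * i = 1] (mod s)" using cong_dvd_modulus_nat[OF i sq(1)] .
    ultimately have "[c2 * i = 1] (mod s)" by (rule cong_trans)
    moreover have "coprime (c2 * i) q0" using c2 ci by simp
    ultimately have one: "\<psi> (c2 * i) = 1" using H' by blast
    have "[c2 * (c1 * i) = c2 * 1] (mod q0)" by (intro cong_mult cong_refl i)
    hence "\<psi> c2 = \<psi> (c2 * (c1 * i))" using dc_cong[OF dc] by simp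
    also have "\<dots> = \<psi> (c2 * i) * \<psi> c1" by (simp add: dc_facts(2)[OF dc, symmetric] mult_ac)
    also have "\<dots> = \<psi> c1" using one by simp
    finally show ?thesis by simp
  qed
  define sel where "sel n = (SOME c. [c = n] (mod s) \<and> coprime c q0 \<and> c > 0)" for n
  have sel: "[sel n = n] (mod s) \<and> coprime (sel n) q0" if "coprime n s" for n
  proof -
    have "\<exists>c. [c = n] (mod s) \<and> coprime c q0 \<and> c > 0" using lift[OF that sq(1) q0] .
    from someI_ex[OF this] show ?thesis unfolding sel_def by blast
  qed
  define \<psi>' where "\<psi>' n = (if coprime n s then \<psi> (sel n) else 0)" for n
  have val: "\<psi>' n = \<psi> n" if "coprime n q0" for n
  proof -
    have "coprime n s" using that sq(1) coprime_divisors dvd_refl by blast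
    thus ?thesis unfolding \<psi>'_def using sel[of n] wd[of "sel n" n] that by simp
  qed
  have dc': "dirichlet_char s \<psi>'"
    unfolding dirichlet_char_def
  proof (intro conjI allI)
    show "s > 0" by fact
  next
    fix a b
    show "\<psi>' (a * b) = \<psi>' a * \<psi>' b"
    proof (cases "coprime a s \<and> coprime b s")
      case True
      hence ab: "coprime (a * b) s" by simp
      have "[sel (a * b) = sel a * sel b] (mod s)"
        using sel[OF ab] sel[of a] sel[of b] True
        by (meson cong_mult cong_sym cong_trans)
      moreover have "coprime (sel a * sel b) q0" using sel[of a] sel[of b] True by simp
      ultimately have "\<psi> (sel (a * b)) = \<psi> (sel a * sel b)"
        using wd sel[OF ab] by blast
      thus ?thesis unfolding \<psi>'_def using True ab dc_facts(2)[OF dc] by simp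
    next
      case False
      thus ?thesis unfolding \<psi>'_def by auto
    qed
  next
    show "\<psi>' 1 = 1" using val[of 1] dc_facts(3)[OF dc] by simp
  next
    fix n
    have cs: "coprime (n + s) s \<longleftrightarrow> coprime n s" by (metis gcd_add1 coprime_iff_gcd_eq_1)
    show "\<psi>' (n + s) = \<psi>' n"
    proof (cases "coprime n s")
      case True
      have ns: "[n + s = n] (mod s)" by (simp add: cong_def)
      have s1: "[sel (n + s) = n + s] (mod s)" using sel[of "n + s"] cs True by blast
      have s2: "[sel n = n] (mod s)" using sel[of n] True by blast
      have "[sel (n + s) = sel n] (mod s)"
        using cong_trans[OF cong_trans[OF s1 ns] cong_sym[OF s2]] .
      hence "\<psi> (sel (n + s)) = \<psi> (sel n)" using wd sel[of n] sel[of "n + s"] True cs by blast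
      thus ?thesis unfolding \<psi>'_def using True cs by simp
    next
      case False
      thus ?thesis unfolding \<psi>'_def using cs by simp
    qed
  next
    fix n
    show "\<psi>' n \<noteq> 0 \<longleftrightarrow> coprime n s"
      unfolding \<psi>'_def using sel[of n] dc_facts(4)[OF dc] by auto
  qed
  have "\<psi> = induced_char q0 \<psi>'"
  proof
    fix n
    show "\<psi> n = induced_char q0 \<psi>' n"
      unfolding induced_char_def principal_char_def
      using val[of n] dc_facts(4)[OF dc, of n] by auto
  qed
  thus False using pc sq dc' unfolding primitive_char_def by blast
qed


lemma ff_cong:
  assumes q: "q > 0" and e: "[a = b] (mod q)"
  shows "finite_fourier q f a = finite_fourier q f b"
proof -
  have "W q (- (int a * int j)) = W q (- (int b * int j))" for j
    using W_cong_nat[OF q e, of "- int j"] by (simp add: mult.commute)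
  thus ?thesis unfolding ff_W by simp
qed

lemma crt_aux:
  fixes c t q0 :: nat
  assumes t: "t > 0" and c: "[c = 1] (mod gcd t q0)" "c \<ge> 1"
  shows "\<exists>x. [x = c] (mod q0) \<and> [x = 1] (mod t)"
proof -
  define s where "s = gcd t q0"
  obtain w where w: "c = w * s + 1" using c cong_le_nat unfolding s_def by blast
  obtain t' where t': "t = Suc t'" using t by (cases t) auto
  define d' where "d' = t + t' * s * w"
  have "s dvd d'" unfolding d'_def s_def by simp
  hence "gcd q0 t dvd d'" unfolding s_def by (simp add: gcd.commute)
  then obtain u where u: "[q0 * u = d'] (mod t)" using cong_solve_dvd_nat by blast
  define x where "x = c + q0 * u"
  have "[x = c] (mod q0)" unfolding x_def by (simp add: cong_def)
  moreover have "[x = c + d'] (mod t)" unfolding x_def by (intro cong_add cong_refl u)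
  moreover have "c + d' = 1 + t * (1 + s * w)" unfolding d'_def w t' by (simp add: algebra_simps)
  moreover have "[1 + t * (1 + s * w) = 1] (mod t)" by (simp only: cong_def mod_mult_self2)
  ultimately show ?thesis by (metis cong_trans)
qed

lemma propB:
  assumes q: "q > 0" and q0q: "q0 dvd q" and pc: "primitive_char q0 \<psi>"
    and P: "\<forall>n\<ge>1. f (n + q) = f n"
    and fm: "\<And>k n. coprime k q \<Longrightarrow> k > 0 \<Longrightarrow> n \<ge> 1 \<Longrightarrow> f (k * n) = \<psi> k * f n"
    and m: "\<not> q0 dvd q div gcd m q"
  shows "finite_fourier q f m = 0"
proof -
  have dc: "dirichlet_char q0 \<psi>" using pc unfolding primitive_char_def by blast
  have q0: "q0 > 0" using dc_facts(1)[OF dc] .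
  define d where "d = gcd m q"
  define t where "t = q div d"
  have d0: "d > 0" unfolding d_def using q by simp
  have qdt: "q = d * t" unfolding t_def d_def by simp
  have t0: "t > 0" using qdt q by (metis gr0I mult_0_right)
  have mt: "\<not> q0 dvd t" using m unfolding t_def d_def .
  define s where "s = gcd t q0"
  have sq: "s dvd q0" "s < q0"
  proof -
    show "s dvd q0" unfolding s_def by simp
    hence "s \<le> q0" using q0 by (simp add: dvd_imp_le)
    moreover have "s \<noteq> q0" using mt unfolding s_def by (metis gcd_dvd1)
    ultimately show "s < q0" by simp
  qed
  obtain c where c: "coprime c q0" "[c = 1] (mod s)" "\<psi> c \<noteq> 1"
    using prim_exists[OF pc sq] by blast
  have c1: "c \<ge> 1"
  proof (rule ccontr)
    assume "\<not> c \<ge> 1"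
    hence "c = 0" by simp
    hence "q0 = 1" using c(1) by simp
    thus False using sq by simp
  qed
  obtain x where x: "[x = c] (mod q0)" "[x = 1] (mod t)"
    using crt_aux[OF t0 c(2)[unfolded s_def] c1] by blast
  have "coprime x q0" using cong_imp_coprime[OF cong_sym[OF x(1)]] c(1) by blast
  moreover have "coprime x t" using cong_imp_coprime[OF cong_sym[OF x(2)]] by simp
  ultimately have "coprime x (t * q0)" by simp
  moreover have "t * q0 dvd q * q0" using qdt by simp
  ultimately obtain c2 where c2: "[c2 = x] (mod t * q0)" "coprime c2 (q * q0)" "c2 > 0"
    using lift[of x "t * q0" "q * q0"] q q0 by auto
  have c2q: "coprime c2 q" using c2(2) by simp
  have "[c2 = c] (mod q0)" using cong_trans[OF cong_dvd_modulus_nat[OF c2(1)] x(1)] by simp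
  hence psic2: "\<psi> c2 \<noteq> 1" using dc_cong[OF dc] c(3) by metis
  have c2t: "[c2 = 1] (mod t)" using cong_trans[OF cong_dvd_modulus_nat[OF c2(1)] x(2)] by simp
  obtain v where v: "c2 = v * t + 1" using cong_le_nat[of 1 c2 t] c2t c2(3) by auto
  obtain m' where m': "m = d * m'" unfolding d_def by (metis gcd_dvd1 dvd_def)
  have "c2 * m = m + q * (v * m')" unfolding v m' qdt by (simp add: algebra_simps)
  hence "[c2 * m = m] (mod q)" by (simp add: cong_def)
  hence "finite_fourier q f (c2 * m) = finite_fourier q f m" using ff_cong[OF q] by blast
  moreover have "\<psi> c2 * finite_fourier q f (c2 * m) = finite_fourier q f m"
    using propA[OF q P c2q c2(3)] fm[OF c2q c2(3)] by blast
  ultimately have "(\<psi> c2 - 1) * finite_fourier q f m = 0" by (simp add: algebra_simps)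
  thus ?thesis using psic2 by simp
qed


lemma A2:
  assumes q: "q > 0" and q0q: "q0 dvd q" and dc: "dirichlet_char q0 \<psi>"
    and P: "\<forall>n\<ge>1. f (n + q) = f n"
    and fm: "\<And>k n. coprime k q \<Longrightarrow> k > 0 \<Longrightarrow> n \<ge> 1 \<Longrightarrow> f (k * n) = \<psi> k * f n"
    and d: "d dvd q" "q0 dvd q div d" and k: "coprime k (q div d)"
  shows "finite_fourier q f (k * d) = cnj (\<psi> k) * finite_fourier q f d"
proof -
  have d0: "d > 0" using d q by (metis dvd_0_left_iff gr0I less_not_refl2)
  have "q div d dvd q" using d by (metis dvd_div_mult_self dvd_triv_left)
  then obtain k' where k': "[k' = k] (mod q div d)" "coprime k' q" "k' > 0"
    using lift[OF k _ q] by blast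
  have "(k' * d) mod (q div d * d) = (k * d) mod (q div d * d)"
    using k'(1) unfolding cong_def by (simp add: mod_mult_mult2)
  hence "[k' * d = k * d] (mod q)" using d by (simp add: cong_def)
  hence "finite_fourier q f (k * d) = finite_fourier q f (k' * d)"
    using ff_cong[OF q] cong_sym by metis
  also have "\<psi> k' * finite_fourier q f (k' * d) = finite_fourier q f d"
    using propA[OF q P k'(2,3)] fm[OF k'(2,3)] by blast
  hence "finite_fourier q f (k' * d) = finite_fourier q f d / \<psi> k'"
    using dc_facts(4)[OF dc, of k'] k'(2) q0q
    by (simp add: field_simps coprime_divisors[OF dvd_refl q0q])
  also have "\<psi> k' = \<psi> k" using dc_cong[OF dc cong_dvd_modulus_nat[OF k'(1) d(2)]] .
  also have "finite_fourier q f d / \<psi> k = cnj (\<psi> k) * finite_fourier q f d"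
  proof -
    have "coprime k' q0" using k'(2) coprime_divisors[OF dvd_refl q0q] by blast
    hence "coprime k q0" using cong_imp_coprime[OF cong_dvd_modulus_nat[OF k'(1) d(2)]] by blast
    thus ?thesis using dc_cnj[OF dc] by simp
  qed
  finally show ?thesis .
qed

lemma gauss_W:
  assumes q: "q > 0" and d: "d dvd q"
  shows "gauss_sum (q div d) n chi = (\<Sum>k\<in>{1..q div d}. chi k * W q (int (k * d) * int n))"
proof -
  obtain r where r: "q = d * r" using d by blast
  have d0: "d > 0" using q r by (metis gr0I mult_0)
  have rr: "q div d = r" using r d0 by simp
  show ?thesis unfolding gauss_sum_def rr
  proof (intro sum.cong refl)
    fix k
    show "chi k * exp (2 * complex_of_real pi * \<i> * of_nat k * of_nat n / of_nat r) =
          chi k * W q (int (k * d) * int n)"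
      unfolding W_def r using d0 by (simp add: field_simps)
  qed
qed

lemma group_gcd:
  fixes G :: "nat \<Rightarrow> complex"
  assumes q: "q > 0"
  shows "(\<Sum>m\<in>{1..q}. G m) = (\<Sum>d\<in>{d. d dvd q}. \<Sum>k\<in>{k\<in>{1..q div d}. coprime k (q div d)}. G (k * d))"
proof -
  have fin: "finite {d. d dvd q}" using q by simp
  have "(\<Sum>m\<in>{1..q}. G m) = (\<Sum>d\<in>{d. d dvd q}. \<Sum>m\<in>{m\<in>{1..q}. gcd m q = d}. G m)"
    by (rule sum.group[symmetric]) (use fin in auto)
  also have "\<dots> = (\<Sum>d\<in>{d. d dvd q}. \<Sum>k\<in>{k\<in>{1..q div d}. coprime k (q div d)}. G (k * d))"
  proof (rule sum.cong[OF refl])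
    fix d assume "d \<in> {d. d dvd q}"
    hence d: "d dvd q" by simp
    obtain r where r: "q = d * r" using d by blast
    have d0: "d > 0" using q r by (metis gr0I mult_0)
    have r0: "r > 0" using q r by (metis gr0I mult_0_right)
    have rr: "q div d = r" using r d0 by simp
    have inj: "inj_on (\<lambda>k. k * d) {k\<in>{1..q div d}. coprime k (q div d)}"
      using d0 by (auto simp: inj_on_def)
    have img: "(\<lambda>k. k * d) ` {k\<in>{1..q div d}. coprime k (q div d)} = {m\<in>{1..q}. gcd m q = d}"
    proof (intro equalityI subsetI)
      fix m assume "m \<in> (\<lambda>k. k * d) ` {k\<in>{1..q div d}. coprime k (q div d)}"
      then obtain k where k: "m = k * d" "k \<in> {1..r}" "coprime k r" unfolding rr by auto
      have "gcd m q = d * gcd k r" unfolding k r by (simp add: gcd_mult_distrib_nat mult.commute)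
      hence "gcd m q = d" using k(3) by simp
      moreover have "m \<in> {1..q}" using k d0 unfolding r by auto
      ultimately show "m \<in> {m\<in>{1..q}. gcd m q = d}" by simp
    next
      fix m assume m: "m \<in> {m\<in>{1..q}. gcd m q = d}"
      hence "d dvd m" by (metis (mono_tags, lifting) gcd_dvd1 mem_Collect_eq)
      then obtain k where k: "m = d * k" by blast
      have "d * gcd k r = d" using m unfolding k r by (simp add: gcd_mult_distrib_nat)
      hence "gcd k r = 1" using d0 by simp
      hence "coprime k r" by (metis coprime_iff_gcd_eq_1)
      moreover have "k \<in> {1..r}" using m unfolding k r using d0 by auto
      ultimately show "m \<in> (\<lambda>k. k * d) ` {k\<in>{1..q div d}. coprime k (q div d)}"
        unfolding rr using k by (auto simp: image_iff mult.commute)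
    qed
    have "sum G ((\<lambda>k. k * d) ` {k\<in>{1..q div d}. coprime k (q div d)}) =
          sum (G \<circ> (\<lambda>k. k * d)) {k\<in>{1..q div d}. coprime k (q div d)}"
      by (rule sum.reindex[OF inj])
    thus "(\<Sum>m\<in>{m\<in>{1..q}. gcd m q = d}. G m) = (\<Sum>k\<in>{k\<in>{1..q div d}. coprime k (q div d)}. G (k * d))"
      unfolding img comp_def .
  qed
  finally show ?thesis .
qed


lemma dvd_swap:
  fixes d q q0 :: nat
  assumes "q > 0" "d dvd q" "q0 dvd q"
  shows "d dvd q div q0 \<longleftrightarrow> q0 dvd q div d"
proof -
  have q00: "q0 \<noteq> 0" "d \<noteq> 0" using assms by auto
  have "d dvd q div q0 \<longleftrightarrow> d * q0 dvd q" using dvd_div_iff_mult[OF q00(1) assms(3)] .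
  also have "\<dots> \<longleftrightarrow> q0 * d dvd q" by (simp add: mult.commute)
  also have "\<dots> \<longleftrightarrow> q0 dvd q div d" using dvd_div_iff_mult[OF q00(2) assms(2)] by simp
  finally show ?thesis .
qed

lemma gcd_kd:
  fixes d q k :: nat
  assumes "d dvd q" "coprime k (q div d)" "q > 0"
  shows "gcd (k * d) q = d"
proof -
  obtain r where r: "q = d * r" using assms(1) by blast
  have d0: "d > 0" using assms(3) r by (metis gr0I mult_0)
  have "q div d = r" using r d0 by simp
  hence "gcd k r = 1" using assms(2) by simp
  thus ?thesis unfolding r by (simp add: gcd_mult_distrib_nat[symmetric] mult.commute)
qed

theorem lemma4p1:
  fixes q q0 :: nat and \<psi> f :: "nat \<Rightarrow> complex"
  assumes "q > 0" and "q0 dvd q"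
    and "primitive_char q0 \<psi>"
    and "\<forall>n\<ge>1. f (n + q) = f n"
    and "in_E q q0 \<psi> f"
  shows "\<forall>n\<ge>1. f n = (\<Sum>d | d dvd (q div q0).
            finite_fourier q f d *
            gauss_sum (q div d) n (\<lambda>k. cnj (induced_char (q div d) \<psi> k)))"
proof (intro allI impI)
  fix n :: nat assume n: "n \<ge> 1"
  note q = assms(1) and q0q = assms(2) and pc = assms(3) and P = assms(4) and E = assms(5)
  have dc: "dirichlet_char q0 \<psi>" using pc unfolding primitive_char_def by blast
  have q0: "q0 > 0" using dc_facts(1)[OF dc] .
  have fm: "\<And>k n. coprime k q \<Longrightarrow> k > 0 \<Longrightarrow> n \<ge> 1 \<Longrightarrow> f (k * n) = \<psi> k * f n"
    using E_mult[OF dc q0q q E] by blast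
  define g where "g = finite_fourier q f"
  define G where "G m = g m * W q (int m * int n)" for m
  define K where "K d = {k\<in>{1..q div d}. coprime k (q div d)}" for d
  have "f n = (\<Sum>m\<in>{1..q}. G m)" unfolding G_def g_def using inversion[OF q P n] .
  also have "\<dots> = (\<Sum>d\<in>{d. d dvd q}. \<Sum>k\<in>K d. G (k * d))"
    unfolding K_def by (rule group_gcd[OF q])
  also have "\<dots> = (\<Sum>d\<in>{d. d dvd q div q0}. \<Sum>k\<in>K d. G (k * d))"
  proof (rule sum.mono_neutral_right)
    show "finite {d. d dvd q}" using q by simp
    have "q div q0 dvd q" using q0q by (metis dvd_div_mult_self dvd_triv_left)
    thus "{d. d dvd q div q0} \<subseteq> {d. d dvd q}" using dvd_trans by blast
    show "\<forall>d\<in>{d. d dvd q} - {d. d dvd q div q0}. (\<Sum>k\<in>K d. G (k * d)) = 0"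
    proof
      fix d assume d: "d \<in> {d. d dvd q} - {d. d dvd q div q0}"
      hence dq: "d dvd q" and nd: "\<not> q0 dvd q div d" using dvd_swap[OF q _ q0q, of d] by auto
      show "(\<Sum>k\<in>K d. G (k * d)) = 0"
      proof (rule sum.neutral, rule ballI)
        fix k assume "k \<in> K d"
        hence "coprime k (q div d)" unfolding K_def by simp
        hence "gcd (k * d) q = d" using gcd_kd[OF dq _ q] by simp
        hence "\<not> q0 dvd q div gcd (k * d) q" using nd by simp
        hence "g (k * d) = 0" unfolding g_def using propB[OF q q0q pc P fm] by blast
        thus "G (k * d) = 0" unfolding G_def by simp
      qed
    qed
  qed
  also have "\<dots> = (\<Sum>d | d dvd (q div q0).
            finite_fourier q f d *
            gauss_sum (q div d) n (\<lambda>k. cnj (induced_char (q div d) \<psi> k)))"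
  proof (rule sum.cong[OF refl])
    fix d assume "d \<in> {d. d dvd q div q0}"
    hence dd: "d dvd q div q0" by simp
    have "q div q0 dvd q" using q0q by (metis dvd_div_mult_self dvd_triv_left)
    hence dq: "d dvd q" using dd dvd_trans by blast
    have qd: "q0 dvd q div d" using dvd_swap[OF q dq q0q] dd by simp
    have "gauss_sum (q div d) n (\<lambda>k. cnj (induced_char (q div d) \<psi> k)) =
          (\<Sum>k\<in>{1..q div d}. cnj (induced_char (q div d) \<psi> k) * W q (int (k * d) * int n))"
      by (rule gauss_W[OF q dq])
    also have "\<dots> = (\<Sum>k\<in>{1..q div d}. if coprime k (q div d) then cnj (\<psi> k) * W q (int (k * d) * int n) else 0)"
      by (intro sum.cong refl) (simp add: induced_char_def principal_char_def)
    also have "\<dots> = (\<Sum>k\<in>K d. cnj (\<psi> k) * W q (int (k * d) * int n))"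
      unfolding K_def by (rule sum.inter_filter[symmetric]) simp
    finally have gs: "gauss_sum (q div d) n (\<lambda>k. cnj (induced_char (q div d) \<psi> k)) =
       (\<Sum>k\<in>K d. cnj (\<psi> k) * W q (int (k * d) * int n))" .
    have "(\<Sum>k\<in>K d. G (k * d)) = (\<Sum>k\<in>K d. g d * (cnj (\<psi> k) * W q (int (k * d) * int n)))"
    proof (rule sum.cong[OF refl])
      fix k assume "k \<in> K d"
      hence "coprime k (q div d)" unfolding K_def by simp
      hence "g (k * d) = cnj (\<psi> k) * g d"
        unfolding g_def using A2[OF q q0q dc P fm dq qd] by blast
      thus "G (k * d) = g d * (cnj (\<psi> k) * W q (int (k * d) * int n))"
        unfolding G_def by simp
    qed
    also have "\<dots> = g d * gauss_sum (q div d) n (\<lambda>k. cnj (induced_char (q div d) \<psi> k))"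
      unfolding gs by (simp add: sum_distrib_left)
    finally show "(\<Sum>k\<in>K d. G (k * d)) = finite_fourier q f d *
            gauss_sum (q div d) n (\<lambda>k. cnj (induced_char (q div d) \<psi> k))"
      unfolding g_def .
  qed
  finally show "f n = (\<Sum>d | d dvd (q div q0).
            finite_fourier q f d *
            gauss_sum (q div d) n (\<lambda>k. cnj (induced_char (q div d) \<psi> k)))" .
qed

end
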